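(* Let $n\ge 3$ and let $c=(c_1,\dots,c_n)\in\{-1,+1\}^n$ be such that the cyclic sequence $(c_1,\dots,c_n,-c_1,\dots,-c_n)$ of length $2n$ contains no $n-1$ cyclically consecutive equal entries. Set $\varphi_1=0$, $\varphi_{n+1}=\pi$, and for $\varphi=(\varphi_2,\dots,\varphi_n)\in\mathbb{R}^{n-1}$, $y=(y_1,y_2)\in\mathbb{R}^2$ define \[ f(\varphi)=-\sum_{j=1}^{n}2\sin\frac{\varphi_{j+1}-\varphi_j}{2},\quad g_1(\varphi)=\sum_{j=2}^{n}(c_{j-1}-c_j)\cos\varphi_j-(c_1+c_n),\quad g_2(\varphi)=\sum_{j=2}^{n}(c_{j-1}-c_j)\sin\varphi_j, \] $L(\varphi,y)=f(\varphi)+y_1g_1(\varphi)+y_2g_2(\varphi)$, let $H(\varphi,y)$ be the Hessian of $L$ with respect to $(\varphi_2,\dots,\varphi_n)$, let $C(\varphi)$ be the $2\times(n-1)$ Jacobian of $(g_1,g_2)$ with respect to $(\varphi_2,\dots,\varphi_n)$, and let \[ K(\varphi,y)=\begin{pmatrix}H(\varphi,y)& C(\varphi)^T\\ C(\varphi)&0\end{pmatrix}. \] Let $w^\ast=(\varphi^\ast,0)$ with $\varphi^\ast_j=(j-1)\pi/n$ for $j=2,\dots,n$. Then $K$ is invertible at every point of some neighborhood of $w^\ast$ in $\mathbb{R}^{n-1}\times\mathbb{R}^2$. *)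

theory Defs
  imports Complex_Main "HOL-Analysis.Derivative" "Jordan_Normal_Form.Matrix" "Jordan_Normal_Form.Determinant"
begin

text \<open>Points phi = (phi_2,...,phi_n) are functions nat => real; only indices 2..n are used.
  Partial derivative with respect to coordinate i.\<close>
definition pd :: "nat \<Rightarrow> ((nat \<Rightarrow> real) \<Rightarrow> real) \<Rightarrow> (nat \<Rightarrow> real) \<Rightarrow> real" where
  "pd i F x = deriv (\<lambda>t. F (x(i := t))) (x i)"

definition ang :: "nat \<Rightarrow> (nat \<Rightarrow> real) \<Rightarrow> nat \<Rightarrow> real" where
  "ang n phi j = (if j = 1 then 0 else if j = n + 1 then pi else phi j)"

definition fobj :: "nat \<Rightarrow> (nat \<Rightarrow> real) \<Rightarrow> real" where
  "fobj n phi = - (\<Sum>j=1..n. 2 * sin ((ang n phi (Suc j) - ang n phi j) / 2))"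

definition g1 :: "nat \<Rightarrow> (nat \<Rightarrow> real) \<Rightarrow> (nat \<Rightarrow> real) \<Rightarrow> real" where
  "g1 n c phi = (\<Sum>j=2..n. (c (j - 1) - c j) * cos (phi j)) - (c 1 + c n)"

definition g2 :: "nat \<Rightarrow> (nat \<Rightarrow> real) \<Rightarrow> (nat \<Rightarrow> real) \<Rightarrow> real" where
  "g2 n c phi = (\<Sum>j=2..n. (c (j - 1) - c j) * sin (phi j))"

definition Lag :: "nat \<Rightarrow> (nat \<Rightarrow> real) \<Rightarrow> real \<times> real \<Rightarrow> (nat \<Rightarrow> real) \<Rightarrow> real" where
  "Lag n c y phi = fobj n phi + fst y * g1 n c phi + snd y * g2 n c phi"

text \<open>The KKT matrix K = [[H, C^T],[C, 0]], of size (n+1)x(n+1).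
  Row/column index k < n-1 corresponds to variable phi_(k+2); index n-1 to g1, index n to g2.\<close>
definition KKT :: "nat \<Rightarrow> (nat \<Rightarrow> real) \<Rightarrow> (nat \<Rightarrow> real) \<Rightarrow> real \<times> real \<Rightarrow> real mat" where
  "KKT n c phi y = mat (n + 1) (n + 1) (\<lambda>(i, j).
     if i < n - 1 \<and> j < n - 1 then pd (i + 2) (pd (j + 2) (Lag n c y)) phi
     else if i < n - 1 \<and> j = n - 1 then pd (i + 2) (g1 n c) phi
     else if i < n - 1 \<and> j = n then pd (i + 2) (g2 n c) phi
     else if i = n - 1 \<and> j < n - 1 then pd (j + 2) (g1 n c) phi
     else if i = n \<and> j < n - 1 then pd (j + 2) (g2 n c) phi
     else 0)"

definition cycseq :: "nat \<Rightarrow> (nat \<Rightarrow> real) \<Rightarrow> nat \<Rightarrow> real" where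
  "cycseq n c k = (if k < n then c (k + 1) else - c (k - n + 1))"

definition no_long_run :: "nat \<Rightarrow> (nat \<Rightarrow> real) \<Rightarrow> bool" where
  "no_long_run n c = (\<not> (\<exists>i < 2 * n. \<forall>t < n - 1.
      cycseq n c ((i + t) mod (2 * n)) = cycseq n c i))"

definition phistar :: "nat \<Rightarrow> nat \<Rightarrow> real" where
  "phistar n j = (real j - 1) * pi / real n"

end

theory Submission
  imports Defs
begin

lemma pd_eq: "((\<lambda>t. F (x(i:=t))) has_real_derivative D) (at (x i)) \<Longrightarrow> pd i F x = D"
  by (simp add: pd_def DERIV_imp_deriv)
lemma upd_deriv: "((\<lambda>t. (x(i:=t)) j) has_real_derivative (if j = i then 1 else 0)) (at t0)"
  by (cases "j = i") (auto intro!: derivative_eq_intros)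
lemma ang_upd: "2 \<le> i \<Longrightarrow> i \<le> n \<Longrightarrow> ang n (x(i:=t)) j = (if j = i then t else ang n x j)"
  by (auto simp: ang_def)
lemma ang_deriv: "2 \<le> i \<Longrightarrow> i \<le> n \<Longrightarrow> ((\<lambda>t. ang n (x(i:=t)) j) has_real_derivative (if j = i then 1 else 0)) (at t0)"
  by (cases "j = i") (auto simp: ang_upd intro!: derivative_eq_intros)

definition aa :: "(nat \<Rightarrow> real) \<Rightarrow> nat \<Rightarrow> real" where "aa c j = c (j - 1) - c j"
definition ss :: "nat \<Rightarrow> (nat \<Rightarrow> real) \<Rightarrow> nat \<Rightarrow> real" where
  "ss n x j = sin ((ang n x (Suc j) - ang n x j) / 2)"
definition GL :: "nat \<Rightarrow> (nat \<Rightarrow> real) \<Rightarrow> real \<times> real \<Rightarrow> nat \<Rightarrow> (nat \<Rightarrow> real) \<Rightarrow> real" where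
  "GL n c y i x = cos ((ang n x (Suc i) - ang n x i) / 2) - cos ((ang n x i - ang n x (i - 1)) / 2)
     - fst y * aa c i * sin (x i) + snd y * aa c i * cos (x i)"

lemma sum_delta_suc: "2 \<le> i \<Longrightarrow> i \<le> Suc n \<Longrightarrow> (\<Sum>j=1..n. (if Suc j = i then h j else 0)) = (h (i - 1) :: real)"
proof -
  assume a: "2 \<le> i" "i \<le> Suc n"
  obtain m where m: "i = Suc m" using a by (cases i) auto
  have "(\<Sum>j=1..n. (if Suc j = i then h j else 0)) = (\<Sum>j=1..n. (if j = m then h j else 0))"
    using m by (intro sum.cong) auto
  also have "\<dots> = h m" using a m by (simp add: sum.delta')
  finally show ?thesis using m by simp
qed

lemma d_g1: "2 \<le> i \<Longrightarrow> i \<le> n \<Longrightarrow> ((\<lambda>t. g1 n c (x(i:=t))) has_real_derivative (- aa c i * sin (x i))) (at (x i))"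
proof -
  assume a: "2 \<le> i" "i \<le> n"
  have "((\<lambda>t. g1 n c (x(i:=t))) has_real_derivative
     (\<Sum>j=2..n. (c (j - 1) - c j) * (- sin ((x(i:=x i)) j) * (if j = i then 1 else 0))) - 0) (at (x i))"
    unfolding g1_def by (intro DERIV_diff DERIV_sum DERIV_cmult DERIV_fun_cos upd_deriv DERIV_const)
  also have "(\<Sum>j=2..n. (c (j - 1) - c j) * (- sin ((x(i:=x i)) j) * (if j = i then 1 else 0))) - 0
     = (\<Sum>j=2..n. (if j = i then (c (j - 1) - c j) * (- sin (x j)) else 0))"
    unfolding diff_0_right by (intro sum.cong) auto
  also have "\<dots> = - aa c i * sin (x i)" using a by (simp add: sum.delta' aa_def algebra_simps)
  finally show ?thesis .
qed

lemma d_g2: "2 \<le> i \<Longrightarrow> i \<le> n \<Longrightarrow> ((\<lambda>t. g2 n c (x(i:=t))) has_real_derivative (aa c i * cos (x i))) (at (x i))"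
proof -
  assume a: "2 \<le> i" "i \<le> n"
  have "((\<lambda>t. g2 n c (x(i:=t))) has_real_derivative
     (\<Sum>j=2..n. (c (j - 1) - c j) * (cos ((x(i:=x i)) j) * (if j = i then 1 else 0)))) (at (x i))"
    unfolding g2_def by (intro DERIV_sum DERIV_cmult DERIV_fun_sin upd_deriv)
  also have "(\<Sum>j=2..n. (c (j - 1) - c j) * (cos ((x(i:=x i)) j) * (if j = i then 1 else 0)))
     = (\<Sum>j=2..n. (if j = i then (c (j - 1) - c j) * (cos (x j)) else 0))"
    by (intro sum.cong) auto
  also have "\<dots> = aa c i * cos (x i)" using a by (simp add: sum.delta' aa_def)
  finally show ?thesis .
qed

lemma angdiff_deriv: "2 \<le> i \<Longrightarrow> i \<le> n \<Longrightarrow>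
  ((\<lambda>t. (ang n (x(i:=t)) p - ang n (x(i:=t)) q) / 2) has_real_derivative
     (((if p = i then 1 else 0) - (if q = i then 1 else 0)) / 2)) (at t0)"
  by (intro DERIV_cdivide DERIV_diff ang_deriv) auto

lemma d_fobj: "2 \<le> i \<Longrightarrow> i \<le> n \<Longrightarrow> ((\<lambda>t. fobj n (x(i:=t))) has_real_derivative
   (cos ((ang n x (Suc i) - ang n x i) / 2) - cos ((ang n x i - ang n x (i - 1)) / 2))) (at (x i))"
proof -
  assume a: "2 \<le> i" "i \<le> n"
  have "((\<lambda>t. fobj n (x(i:=t))) has_real_derivative
     - (\<Sum>j=1..n. 2 * (cos ((ang n (x(i:=x i)) (Suc j) - ang n (x(i:=x i)) j) / 2) *
          (((if Suc j = i then 1 else 0) - (if j = i then 1 else 0)) / 2)))) (at (x i))"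
    unfolding fobj_def using a by (intro DERIV_minus DERIV_sum DERIV_cmult DERIV_fun_sin angdiff_deriv)
  also have "- (\<Sum>j=1..n. 2 * (cos ((ang n (x(i:=x i)) (Suc j) - ang n (x(i:=x i)) j) / 2) *
          (((if Suc j = i then 1 else 0) - (if j = i then 1 else 0)) / 2)))
     = (\<Sum>j=1..n. (if j = i then cos ((ang n x (Suc j) - ang n x j) / 2) else 0))
       - (\<Sum>j=1..n. (if Suc j = i then cos ((ang n x (Suc j) - ang n x j) / 2) else 0))"
    unfolding sum_subtractf[symmetric] sum_negf[symmetric] by (intro sum.cong) auto
  also have "\<dots> = cos ((ang n x (Suc i) - ang n x i) / 2) - cos ((ang n x i - ang n x (i - 1)) / 2)"
    using a sum_delta_suc[OF a(1) le_SucI[OF a(2)], of "\<lambda>j. cos ((ang n x (Suc j) - ang n x j) / 2)"]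
    by (simp add: sum.delta')
  finally show ?thesis .
qed

lemma pd_g1: "2 \<le> i \<Longrightarrow> i \<le> n \<Longrightarrow> pd i (g1 n c) x = - aa c i * sin (x i)"
  by (rule pd_eq, rule d_g1)
lemma pd_g2: "2 \<le> i \<Longrightarrow> i \<le> n \<Longrightarrow> pd i (g2 n c) x = aa c i * cos (x i)"
  by (rule pd_eq, rule d_g2)

lemma pd_Lag: assumes "2 \<le> i" "i \<le> n" shows "pd i (Lag n c y) = GL n c y i"
proof
  fix x
  have "((\<lambda>t. Lag n c y (x(i:=t))) has_real_derivative
     (cos ((ang n x (Suc i) - ang n x i) / 2) - cos ((ang n x i - ang n x (i - 1)) / 2))
     + fst y * (- aa c i * sin (x i)) + snd y * (aa c i * cos (x i))) (at (x i))"
    unfolding Lag_def using assms by (intro DERIV_add DERIV_cmult d_fobj d_g1 d_g2)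
  then show "pd i (Lag n c y) x = GL n c y i x"
    unfolding GL_def by (rule pd_eq[THEN trans]) (simp add: algebra_simps)
qed

definition dl :: "nat \<Rightarrow> nat \<Rightarrow> real" where "dl p k = (if p = k then 1 else 0)"

definition HH :: "nat \<Rightarrow> (nat \<Rightarrow> real) \<Rightarrow> real \<times> real \<Rightarrow> (nat \<Rightarrow> real) \<Rightarrow> nat \<Rightarrow> nat \<Rightarrow> real" where
  "HH n c y x k i = ss n x i / 2 * (dl i k - dl (Suc i) k) + ss n x (i - 1) / 2 * (dl i k - dl (i - 1) k)
     - aa c i * (fst y * cos (x i) + snd y * sin (x i)) * dl i k"

lemma pd_Lag2: assumes "2 \<le> i" "i \<le> n" "2 \<le> k" "k \<le> n"
  shows "pd k (pd i (Lag n c y)) x = HH n c y x k i"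
proof -
  have "((\<lambda>t. GL n c y i (x(k:=t))) has_real_derivative
      (- sin ((ang n (x(k:=x k)) (Suc i) - ang n (x(k:=x k)) i) / 2) * (((if Suc i = k then 1 else 0) - (if i = k then 1 else 0)) / 2))
      - (- sin ((ang n (x(k:=x k)) i - ang n (x(k:=x k)) (i - 1)) / 2) * (((if i = k then 1 else 0) - (if i - 1 = k then 1 else 0)) / 2))
      - fst y * aa c i * (cos ((x(k:=x k)) i) * (if i = k then 1 else 0))
      + snd y * aa c i * (- sin ((x(k:=x k)) i) * (if i = k then 1 else 0))) (at (x k))"
    unfolding GL_def using assms
    by (intro DERIV_add DERIV_diff DERIV_cmult DERIV_fun_sin DERIV_fun_cos angdiff_deriv upd_deriv)
  then have "((\<lambda>t. GL n c y i (x(k:=t))) has_real_derivative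
      (- sin ((ang n x (Suc i) - ang n x i) / 2) * (((if Suc i = k then 1 else 0) - (if i = k then 1 else 0)) / 2))
      - (- sin ((ang n x i - ang n x (i - 1)) / 2) * (((if i = k then 1 else 0) - (if i - 1 = k then 1 else 0)) / 2))
      - fst y * aa c i * (cos (x i) * (if i = k then 1 else 0))
      + snd y * aa c i * (- sin (x i) * (if i = k then 1 else 0))) (at (x k))" by simp
  moreover have "Suc (i - 1) = i" using assms by simp
  ultimately show ?thesis unfolding pd_Lag[OF assms(1,2)]
    by (intro pd_eq[THEN trans]) (auto simp: HH_def ss_def dl_def algebra_simps)
qed


lemma cs_sum: "finite A \<Longrightarrow> (\<Sum>x\<in>A. f x)^2 \<le> real (card A) * (\<Sum>x\<in>A. (f x)^2)"
proof (induction A rule: finite_induct)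
  case empty then show ?case by simp
next
  case (insert a A)
  have "2 * (\<Sum>x\<in>A. f x) * f a = (\<Sum>x\<in>A. 2 * f x * f a)" by (simp add: sum_distrib_left sum_distrib_right mult.assoc)
  also have "\<dots> \<le> (\<Sum>x\<in>A. (f x)^2 + (f a)^2)"
    by (intro sum_mono) (smt (verit) sum_squares_bound)
  also have "\<dots> = (\<Sum>x\<in>A. (f x)^2) + real (card A) * (f a)^2" by (simp add: sum.distrib)
  finally have *: "2 * (\<Sum>x\<in>A. f x) * f a \<le> (\<Sum>x\<in>A. (f x)^2) + real (card A) * (f a)^2" .
  have "(\<Sum>x\<in>insert a A. f x)^2 = (\<Sum>x\<in>A. f x)^2 + 2 * (\<Sum>x\<in>A. f x) * f a + (f a)^2"
    using insert by (simp add: power2_eq_square algebra_simps)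
  also have "\<dots> \<le> real (card A) * (\<Sum>x\<in>A. (f x)^2) + ((\<Sum>x\<in>A. (f x)^2) + real (card A) * (f a)^2) + (f a)^2"
    using insert.IH * by linarith
  also have "\<dots> = real (card (insert a A)) * (\<Sum>x\<in>insert a A. (f x)^2)"
    using insert by (simp add: algebra_simps)
  finally show ?case .
qed

lemma sbp: assumes u1: "u (1::nat) = (0::real)" and N: "1 \<le> N" shows "
  (\<Sum>k=2..N. u k * (s k * (u k - u (Suc k)) + s (k - 1) * (u k - u (k - 1))))
   = (\<Sum>j=1..N. s j * (u (Suc j) - u j)^2) - s N * u (Suc N) * (u (Suc N) - u N)"
using N proof (induction N rule: dec_induct)
  case base then show ?case using u1 by (simp add: power2_eq_square algebra_simps)
next
  case (step N)
  have e1: "{2..Suc N} = insert (Suc N) {2..N}" using step by auto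
  have e2: "{1..Suc N} = insert (Suc N) {1..N}" by auto
  show ?case unfolding e1 e2 using step by (simp add: power2_eq_square algebra_simps)
qed

lemma poinc: assumes "u (1::nat) = (0::real)" "2 \<le> k" "k \<le> n"
  shows "(u k)^2 \<le> real n * (\<Sum>j=1..n. (u (Suc j) - u j)^2)"
proof -
  have "u k = (\<Sum>j=1..k-1. u (Suc j) - u j)" using assms by (subst sum_Suc_diff) auto
  then have "(u k)^2 \<le> real (card {1..k-1}) * (\<Sum>j=1..k-1. (u (Suc j) - u j)^2)"
    using cs_sum[of "{1..k-1}" "\<lambda>j. u (Suc j) - u j"] by simp
  also have "\<dots> \<le> real n * (\<Sum>j=1..n. (u (Suc j) - u j)^2)"
    using assms by (intro mult_mono sum_mono2 sum_nonneg) auto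
  finally show ?thesis .
qed

lemma core:
  fixes u s b :: "nat \<Rightarrow> real"
  assumes n: "2 \<le> n" and u1: "u 1 = 0" and un: "u (Suc n) = 0"
    and s0: "0 < s0" and sge: "\<forall>j\<in>{1..n}. s0 \<le> s j"
    and bb: "\<forall>k\<in>{2..n}. \<bar>b k\<bar> \<le> B" and B: "B * real n ^ 2 * 4 \<le> s0"
    and eq: "(\<Sum>k=2..n. u k * (s k * (u k - u (Suc k)) + s (k - 1) * (u k - u (k - 1))) / 2 - b k * (u k)^2) = 0"
  shows "\<forall>k\<in>{2..n}. u k = 0"
proof -
  define D where "D = (\<Sum>j=1..n. (u (Suc j) - u j)^2)"
  have D0: "0 \<le> D" unfolding D_def by (intro sum_nonneg) auto
  have "(\<Sum>k=2..n. u k * (s k * (u k - u (Suc k)) + s (k - 1) * (u k - u (k - 1)))) / 2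
      = (\<Sum>k=2..n. b k * (u k)^2)"
    using eq by (simp add: sum_subtractf sum_divide_distrib)
  then have eq2: "(\<Sum>j=1..n. s j * (u (Suc j) - u j)^2) / 2 = (\<Sum>k=2..n. b k * (u k)^2)"
    using sbp[of u n s] u1 un n by simp
  have "s0 * D = (\<Sum>j=1..n. s0 * (u (Suc j) - u j)^2)" unfolding D_def by (simp add: sum_distrib_left)
  also have "\<dots> \<le> (\<Sum>j=1..n. s j * (u (Suc j) - u j)^2)"
    using sge by (intro sum_mono mult_right_mono) auto
  finally have l: "s0 * D / 2 \<le> (\<Sum>k=2..n. b k * (u k)^2)" using eq2 by linarith
  have "(\<Sum>k=2..n. b k * (u k)^2) \<le> (\<Sum>k=2..n. B * (real n * D))"
  proof (intro sum_mono)
    fix k assume k: "k \<in> {2..n}"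
    have "b k * (u k)^2 \<le> B * (u k)^2" using bb k by (intro mult_right_mono) (auto simp: abs_le_iff)
    also have "\<dots> \<le> B * (real n * D)" unfolding D_def
      using bb k poinc[of u k n, OF u1] by (intro mult_left_mono) auto
    finally show "b k * (u k)^2 \<le> B * (real n * D)" .
  qed
  also have "\<dots> = real (n - 1) * B * real n * D" by simp
  also have "\<dots> \<le> B * real n ^ 2 * D"
  proof -
    have "0 \<le> B" using bb n by force
    have "(real n - 1) * B * real n \<le> B * (real n * real n)"
      using \<open>0 \<le> B\<close> by (simp add: algebra_simps mult_nonneg_nonneg)
    then show ?thesis using D0 n by (intro mult_right_mono) (auto simp: power2_eq_square of_nat_diff)
  qed
  finally have "s0 * D / 2 \<le> B * real n ^ 2 * D" using l by linarith
  moreover have "B * real n ^ 2 * D \<le> s0 / 4 * D" using B D0 by (intro mult_right_mono) auto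
  ultimately have "s0 * D / 2 \<le> s0 / 4 * D" by linarith
  then have "s0 * D \<le> 0" by (simp add: field_simps)
  then have "D = 0" using s0 D0 by (simp add: mult_le_0_iff)
  show ?thesis
  proof
    fix k assume k: "k \<in> {2..n}"
    have "(u k)^2 \<le> 0" using poinc[of u k n, OF u1] k \<open>D = 0\<close> unfolding D_def by auto
    then show "u k = 0" by simp
  qed
qed


lemma const_run: fixes c :: "nat \<Rightarrow> real" and a j b :: nat assumes "a \<le> j" "j \<le> b" "\<forall>m. a < m \<longrightarrow> m \<le> b \<longrightarrow> c (m - 1) = c m"
  shows "c j = (c a :: real)"
  using assms(1,2)
proof (induction j rule: dec_induct)
  case base then show ?case by simp
next
  case (step j) then show ?case using assms(3)[rule_format, of "Suc j"] by simp
qed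

lemma two_changes:
  fixes c :: "nat \<Rightarrow> real"
  assumes n: "n \<ge> 3" and pm: "\<forall>j\<in>{1..n}. c j = 1 \<or> c j = -1" and nl: "no_long_run n c"
  shows "\<exists>p q. 2 \<le> p \<and> p < q \<and> q \<le> n \<and> c (p - 1) \<noteq> c p \<and> c (q - 1) \<noteq> c q"
proof (rule ccontr)
  assume H: "\<not> ?thesis"
  show False
  proof (cases "\<exists>m0. 2 \<le> m0 \<and> m0 \<le> n \<and> c (m0 - 1) \<noteq> c m0")
    case False
    then have all: "\<forall>j. 1 \<le> j \<longrightarrow> j \<le> n \<longrightarrow> c j = c 1"
    proof -
      have ch: "\<forall>m. 1 < m \<longrightarrow> m \<le> n \<longrightarrow> c (m - 1) = c m" using False by auto
      show ?thesis using const_run[OF _ _ ch] by blast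
    qed
    have "\<forall>t < n - 1. cycseq n c ((0 + t) mod (2 * n)) = cycseq n c 0"
    proof (intro allI impI)
      fix t assume t: "t < n - 1"
      then have "(0 + t) mod (2 * n) = t" by simp
      then show "cycseq n c ((0 + t) mod (2 * n)) = cycseq n c 0"
        using t n all[rule_format, of "t + 1"] by (simp add: cycseq_def)
    qed
    moreover have "(0::nat) < 2 * n" using n by simp
    ultimately show False using nl unfolding no_long_run_def by blast
  next
    case True
    then obtain m0 where m0: "2 \<le> m0" "m0 \<le> n" "c (m0 - 1) \<noteq> c m0" by blast
    have oth: "\<forall>m. 2 \<le> m \<longrightarrow> m \<le> n \<longrightarrow> m \<noteq> m0 \<longrightarrow> c (m - 1) = c m"
    proof (intro allI impI)
      fix m assume m: "2 \<le> m" "m \<le> n" "m \<noteq> m0"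
      show "c (m - 1) = c m"
      proof (cases "m < m0")
        case True then show ?thesis using H m m0 by blast
      next
        case False then have "m0 < m" using m by simp
        then show ?thesis using H m m0 by blast
      qed
    qed
    have lo: "\<forall>j. 1 \<le> j \<longrightarrow> j < m0 \<longrightarrow> c j = c 1"
    proof (intro allI impI)
      fix j assume j: "1 \<le> j" "j < m0"
      have ch: "\<forall>m. 1 < m \<longrightarrow> m \<le> m0 - 1 \<longrightarrow> c (m - 1) = c m" using oth m0 by auto
      show "c j = c 1" using const_run[OF _ _ ch, of j] j by simp
    qed
    have hi: "\<forall>j. m0 \<le> j \<longrightarrow> j \<le> n \<longrightarrow> c j = c m0"
    proof (intro allI impI)
      fix j assume j: "m0 \<le> j" "j \<le> n"
      have ch: "\<forall>m. m0 < m \<longrightarrow> m \<le> n \<longrightarrow> c (m - 1) = c m" using oth m0 by auto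
      show "c j = c m0" using const_run[OF _ _ ch, of j] j by simp
    qed
    have "c (m0 - 1) = c 1" by (rule lo[rule_format]) (use m0 in auto)
    moreover have "c m0 = 1 \<or> c m0 = -1" "c 1 = 1 \<or> c 1 = -1" using pm m0 by auto
    ultimately have neg: "c m0 = - c 1" using m0 by linarith
    have "\<forall>t < n - 1. cycseq n c ((m0 - 1 + t) mod (2 * n)) = cycseq n c (m0 - 1)"
    proof (intro allI impI)
      fix t assume t: "t < n - 1"
      then have md: "(m0 - 1 + t) mod (2 * n) = m0 - 1 + t" using m0 by simp
      have "m0 - 1 < n" using m0 by simp
      then have c0: "cycseq n c (m0 - 1) = c m0" using m0 by (simp add: cycseq_def)
      show "cycseq n c ((m0 - 1 + t) mod (2 * n)) = cycseq n c (m0 - 1)"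
      proof (cases "m0 - 1 + t < n")
        case True
        then show ?thesis unfolding md c0 using hi[rule_format, of "m0 - 1 + t + 1"] m0
          by (simp add: cycseq_def)
      next
        case False
        then show ?thesis unfolding md c0 using lo[rule_format, of "m0 - 1 + t - n + 1"] m0 t neg
          by (simp add: cycseq_def)
      qed
    qed
    moreover have "m0 - 1 < 2 * n" using m0 by simp
    ultimately show False using nl unfolding no_long_run_def by blast
  qed
qed

lemma inv_of_ker:
  fixes A :: "real mat"
  assumes A: "A \<in> carrier_mat m m" and K: "\<forall>v\<in>carrier_vec m. A *\<^sub>v v = 0\<^sub>v m \<longrightarrow> v = 0\<^sub>v m"
  shows "invertible_mat A"
proof -
  have "det A \<noteq> 0" using K unfolding det_0_iff_vec_prod_zero[OF A] by blast
  from det_non_zero_imp_unit[OF A this, of "()"]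
  obtain B where B: "B \<in> carrier_mat m m" "B * A = 1\<^sub>m m" "A * B = 1\<^sub>m m"
    unfolding Units_def by (auto simp: ring_mat_simps)
  show ?thesis unfolding invertible_mat_def inverts_mat_def using A B by (auto simp: square_mat.simps)
qed


lemma split_sum: fixes n :: nat shows "2 \<le> n \<Longrightarrow> (\<Sum>j<n+1. F j) = (\<Sum>m=2..n. F (m - 2)) + F (n - 1) + (F n :: real)"
proof -
  assume n: "2 \<le> n"
  obtain k where k: "n = Suc k" using n by (cases n) auto
  have "(\<Sum>j<n+1. F j) = F n + (F (n - 1) + (\<Sum>j<n-1. F j))" using k by simp
  moreover have "(\<Sum>j<n-1. F j) = (\<Sum>m=2..n. F (m - 2))"
    by (rule sum.reindex_bij_witness[where i="\<lambda>m. m - 2" and j="\<lambda>j. j + 2"]) (use n in auto)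
  ultimately show ?thesis by simp
qed

lemma sum_dl: "(\<forall>m. m \<notin> {2..n} \<longrightarrow> u m = 0) \<Longrightarrow> (\<Sum>k=2..n. u k * dl p k) = (u p :: real)"
proof -
  assume z: "\<forall>m. m \<notin> {2..n} \<longrightarrow> u m = 0"
  have "(\<Sum>k=2..n. u k * dl p k) = (\<Sum>k=2..n. if p = k then u k else 0)"
    by (intro sum.cong) (auto simp: dl_def)
  also have "\<dots> = u p" using z by (auto simp: sum.delta)
  finally show ?thesis .
qed

lemma ker:
  fixes c :: "nat \<Rightarrow> real"
  assumes n: "3 \<le> n"
    and pq: "2 \<le> p" "p < q" "q \<le> n" "aa c p \<noteq> 0" "aa c q \<noteq> 0"
    and sq: "0 < sin (phi q - phi p)"
    and s0: "0 < s0" "\<forall>j\<in>{1..n}. s0 \<le> ss n phi j"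
    and bb: "\<forall>k\<in>{2..n}. \<bar>aa c k * (fst y * cos (phi k) + snd y * sin (phi k))\<bar> \<le> B"
      "B * real n ^ 2 * 4 \<le> s0"
    and v: "v \<in> carrier_vec (n+1)" "KKT n c phi y *\<^sub>v v = 0\<^sub>v (n+1)"
  shows "v = 0\<^sub>v (n+1)"
proof -
  define u where "u m = (if 2 \<le> m \<and> m \<le> n then vec_index v (m - 2) else 0)" for m
  define l1 where "l1 = vec_index v (n - 1)"
  define l2 where "l2 = vec_index v n"
  define C1 where "C1 m = - aa c m * sin (phi m)" for m
  define C2 where "C2 m = aa c m * cos (phi m)" for m
  define b where "b k = aa c k * (fst y * cos (phi k) + snd y * sin (phi k))" for k
  have uz: "\<forall>m. m \<notin> {2..n} \<longrightarrow> u m = 0" by (auto simp: u_def)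
  have n2: "2 \<le> n" using n by simp
  have row: "(\<Sum>m=2..n. KKT n c phi y $$ (r, m - 2) * u m) + KKT n c phi y $$ (r, n - 1) * l1
      + KKT n c phi y $$ (r, n) * l2 = 0" if r: "r < n + 1" for r
  proof -
    have dr: "dim_row (KKT n c phi y) = n + 1" "dim_col (KKT n c phi y) = n + 1" by (auto simp: KKT_def)
    have "0 = vec_index (KKT n c phi y *\<^sub>v v) r" using v r by simp
    also have "\<dots> = (\<Sum>j<n+1. KKT n c phi y $$ (r, j) * vec_index v j)"
      using r dr by (simp add: scalar_prod_def lessThan_atLeast0 carrier_vecD[OF v(1)])
    also have "\<dots> = (\<Sum>m=2..n. KKT n c phi y $$ (r, m - 2) * vec_index v (m - 2))
       + KKT n c phi y $$ (r, n - 1) * l1 + KKT n c phi y $$ (r, n) * l2"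
      unfolding l1_def l2_def by (rule split_sum[OF n2])
    also have "(\<Sum>m=2..n. KKT n c phi y $$ (r, m - 2) * vec_index v (m - 2)) = (\<Sum>m=2..n. KKT n c phi y $$ (r, m - 2) * u m)"
      by (intro sum.cong) (auto simp: u_def)
    finally show ?thesis by simp
  qed
  have rowH: "(\<Sum>m=2..n. HH n c y phi m0 m * u m) + C1 m0 * l1 + C2 m0 * l2 = 0"
    if m0: "2 \<le> m0" "m0 \<le> n" for m0
  proof -
    have "(\<Sum>m=2..n. KKT n c phi y $$ (m0 - 2, m - 2) * u m) = (\<Sum>m=2..n. HH n c y phi m0 m * u m)"
    proof (intro sum.cong refl)
      fix m assume m: "m \<in> {2..n}"
      have "m0 - 2 < n + 1" "m - 2 < n + 1" "m0 - 2 < n - 1" "m - 2 < n - 1" "m0 - 2 + 2 = m0" "m - 2 + 2 = m"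
        using m m0 by auto
      then have "KKT n c phi y $$ (m0 - 2, m - 2) = pd m0 (pd m (Lag n c y)) phi"
        unfolding KKT_def by (subst index_mat) auto
      then show "KKT n c phi y $$ (m0 - 2, m - 2) * u m = HH n c y phi m0 m * u m"
        using m m0 pd_Lag2 by simp
    qed
    moreover have ar: "m0 - 2 < n - 1" "Suc (Suc (m0 - 2)) = m0" using m0 by auto
    moreover have "KKT n c phi y $$ (m0 - 2, n - 1) = C1 m0"
      unfolding KKT_def using m0 ar n by (subst index_mat) (auto simp: C1_def pd_g1)
    moreover have "KKT n c phi y $$ (m0 - 2, n) = C2 m0"
      unfolding KKT_def using m0 ar n by (subst index_mat) (auto simp: C2_def pd_g2)
    ultimately show ?thesis using row[of "m0 - 2"] m0 by simp
  qed
  have rowC1: "(\<Sum>m=2..n. C1 m * u m) = 0"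
  proof -
    have "(\<Sum>m=2..n. KKT n c phi y $$ (n - 1, m - 2) * u m) = (\<Sum>m=2..n. C1 m * u m)"
    proof (intro sum.cong refl)
      fix m assume m: "m \<in> {2..n}"
      have ar: "m - 2 < n - 1" "Suc (Suc (m - 2)) = m" "n - 1 < n + 1" "m - 2 < n + 1" using m n by auto
      show "KKT n c phi y $$ (n - 1, m - 2) * u m = C1 m * u m"
        unfolding KKT_def using ar n by (subst index_mat) (auto simp: C1_def pd_g1)
    qed
    moreover have "KKT n c phi y $$ (n - 1, n - 1) = 0" "KKT n c phi y $$ (n - 1, n) = 0"
      using n by (auto simp: KKT_def)
    ultimately show ?thesis using row[of "n - 1"] n by simp
  qed
  have rowC2: "(\<Sum>m=2..n. C2 m * u m) = 0"
  proof -
    have "(\<Sum>m=2..n. KKT n c phi y $$ (n, m - 2) * u m) = (\<Sum>m=2..n. C2 m * u m)"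
    proof (intro sum.cong refl)
      fix m assume m: "m \<in> {2..n}"
      have ar: "m - 2 < n - 1" "Suc (Suc (m - 2)) = m" "n < n + 1" "m - 2 < n + 1" using m n by auto
      show "KKT n c phi y $$ (n, m - 2) * u m = C2 m * u m"
        unfolding KKT_def using ar n by (subst index_mat) (auto simp: C2_def pd_g2)
    qed
    moreover have "KKT n c phi y $$ (n, n - 1) = 0" "KKT n c phi y $$ (n, n) = 0"
      using n by (auto simp: KKT_def)
    ultimately show ?thesis using row[of n] n by simp
  qed
  have inner: "(\<Sum>m0=2..n. u m0 * HH n c y phi m0 m) =
      ss n phi m / 2 * (u m - u (Suc m)) + ss n phi (m - 1) / 2 * (u m - u (m - 1)) - b m * u m" for m
  proof -
    have "(\<Sum>m0=2..n. u m0 * HH n c y phi m0 m) = (\<Sum>m0=2..n.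
       ss n phi m / 2 * (u m0 * dl m m0) - ss n phi m / 2 * (u m0 * dl (Suc m) m0)
       + ss n phi (m - 1) / 2 * (u m0 * dl m m0) - ss n phi (m - 1) / 2 * (u m0 * dl (m - 1) m0)
       - b m * (u m0 * dl m m0))"
      by (intro sum.cong refl) (simp add: HH_def b_def field_simps)
    also have "\<dots> = ss n phi m / 2 * (\<Sum>m0=2..n. u m0 * dl m m0) - ss n phi m / 2 * (\<Sum>m0=2..n. u m0 * dl (Suc m) m0)
       + ss n phi (m - 1) / 2 * (\<Sum>m0=2..n. u m0 * dl m m0) - ss n phi (m - 1) / 2 * (\<Sum>m0=2..n. u m0 * dl (m - 1) m0)
       - b m * (\<Sum>m0=2..n. u m0 * dl m m0)"
      by (simp add: sum.distrib sum_subtractf sum_distrib_left)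
    also have "\<dots> = ss n phi m / 2 * (u m - u (Suc m)) + ss n phi (m - 1) / 2 * (u m - u (m - 1)) - b m * u m"
      using sum_dl[OF uz] by (simp add: field_simps)
    finally show ?thesis .
  qed
  have "0 = (\<Sum>m0=2..n. u m0 * ((\<Sum>m=2..n. HH n c y phi m0 m * u m) + C1 m0 * l1 + C2 m0 * l2))"
    using rowH by simp
  also have "\<dots> = (\<Sum>m0=2..n. \<Sum>m=2..n. u m0 * HH n c y phi m0 m * u m)
      + l1 * (\<Sum>m=2..n. C1 m * u m) + l2 * (\<Sum>m=2..n. C2 m * u m)"
    by (simp add: algebra_simps sum.distrib sum_distrib_left)
  also have "\<dots> = (\<Sum>m0=2..n. \<Sum>m=2..n. u m0 * HH n c y phi m0 m * u m)"
    using rowC1 rowC2 by simp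
  also have "\<dots> = (\<Sum>m=2..n. u m * (\<Sum>m0=2..n. u m0 * HH n c y phi m0 m))"
    by (subst sum.swap) (simp add: sum_distrib_left sum_distrib_right algebra_simps)
  also have "\<dots> = (\<Sum>m=2..n. u m * (ss n phi m * (u m - u (Suc m)) + ss n phi (m - 1) * (u m - u (m - 1))) / 2
        - b m * (u m)^2)"
    unfolding inner by (intro sum.cong refl) (simp add: field_simps power2_eq_square)
  finally have eq: "(\<Sum>m=2..n. u m * (ss n phi m * (u m - u (Suc m)) + ss n phi (m - 1) * (u m - u (m - 1))) / 2
        - b m * (u m)^2) = 0" by simp
  have u0: "\<forall>k\<in>{2..n}. u k = 0"
    by (rule core[OF n2 _ _ s0(1) s0(2) _ bb(2) eq]) (use bb in \<open>auto simp: u_def b_def\<close>)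
  have lin: "C1 m0 * l1 + C2 m0 * l2 = 0" if m0: "2 \<le> m0" "m0 \<le> n" for m0
  proof -
    have "(\<Sum>m=2..n. HH n c y phi m0 m * u m) = 0" by (intro sum.neutral) (use u0 in auto)
    then show ?thesis using rowH[OF m0] by simp
  qed
  have eqp: "l1 * sin (phi p) = l2 * cos (phi p)"
  proof -
    have "aa c p * (l2 * cos (phi p) - l1 * sin (phi p)) = 0" using lin[of p] pq
      by (simp add: C1_def C2_def algebra_simps)
    then show ?thesis using pq by simp
  qed
  have eqq: "l1 * sin (phi q) = l2 * cos (phi q)"
  proof -
    have "aa c q * (l2 * cos (phi q) - l1 * sin (phi q)) = 0" using lin[of q] pq
      by (simp add: C1_def C2_def algebra_simps)
    then show ?thesis using pq by simp
  qed
  have "l1 * sin (phi q - phi p) = cos (phi p) * (l1 * sin (phi q)) - cos (phi q) * (l1 * sin (phi p))"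
    by (simp add: sin_diff algebra_simps)
  also have "\<dots> = cos (phi p) * (l2 * cos (phi q)) - cos (phi q) * (l2 * cos (phi p))"
    by (simp only: eqp eqq)
  also have "\<dots> = 0" by simp
  finally have l10: "l1 = 0" using sq by simp
  have "l2 * sin (phi q - phi p) = sin (phi q) * (l2 * cos (phi p)) - sin (phi p) * (l2 * cos (phi q))"
    by (simp add: sin_diff algebra_simps)
  also have "\<dots> = sin (phi q) * (l1 * sin (phi p)) - sin (phi p) * (l1 * sin (phi q))"
    by (simp only: eqp eqq)
  also have "\<dots> = 0" by simp
  finally have l20: "l2 = 0" using sq by simp
  show ?thesis
  proof (rule eq_vecI)
    show "dim_vec v = dim_vec (0\<^sub>v (n + 1))" using v by simp
  next
    fix i assume i: "i < dim_vec (0\<^sub>v (n + 1) :: real vec)"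
    then have i': "i < n + 1" by simp
    show "vec_index v i = vec_index (0\<^sub>v (n + 1)) i"
    proof (cases "i < n - 1")
      case True
      then have "u (i + 2) = vec_index v i" by (simp add: u_def)
      moreover have "u (i + 2) = 0" using u0 True by auto
      ultimately show ?thesis using i' by simp
    next
      case False
      then have "i = n - 1 \<or> i = n" using i' by auto
      then show ?thesis using l10 l20 i' unfolding l1_def l2_def by auto
    qed
  qed
qed

theorem lemma4:
  fixes n :: nat and c :: "nat \<Rightarrow> real"
  assumes "n \<ge> 3"
    and "\<forall>j\<in>{1..n}. c j = 1 \<or> c j = -1"
    and "no_long_run n c"
  shows "\<exists>e>0. \<forall>phi y. (\<forall>j\<in>{2..n}. \<bar>phi j - phistar n j\<bar> < e)
           \<and> \<bar>fst y\<bar> < e \<and> \<bar>snd y\<bar> < e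
           \<longrightarrow> invertible_mat (KKT n c phi y)"
proof -
  have n3: "3 \<le> n" using assms(1) .
  have npos: "0 < real n" using n3 by simp
  obtain p q where pq: "2 \<le> p" "p < q" "q \<le> n" "c (p - 1) \<noteq> c p" "c (q - 1) \<noteq> c q"
    using two_changes[OF assms] by blast
  have apq: "aa c p \<noteq> 0" "aa c q \<noteq> 0" using pq by (auto simp: aa_def)
  define w where "w = pi / real n"
  have wpos: "0 < w" unfolding w_def using npos by simp
  have nw: "real n * w = pi" unfolding w_def using npos by simp
  have w3: "w \<le> pi / 3" unfolding w_def using n3 by (intro divide_left_mono) auto
  define s0 where "s0 = sin (w / 4)"
  have s0pos: "0 < s0" unfolding s0_def using wpos w3 by (intro sin_gt_zero) auto
  define e where "e = min (w / 4) (s0 / (16 * real n ^ 2))"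
  have epos: "0 < e" unfolding e_def using wpos s0pos npos by simp
  have ew: "e \<le> w / 4" unfolding e_def by simp
  have es: "16 * real n ^ 2 * e \<le> s0"
  proof -
    have "e \<le> s0 / (16 * real n ^ 2)" unfolding e_def by simp
    then show ?thesis using npos by (simp add: field_simps)
  qed
  show ?thesis
  proof (intro exI[of _ e] conjI allI impI)
    show "0 < e" using epos .
    fix phi and y :: "real \<times> real"
    assume H: "(\<forall>j\<in>{2..n}. \<bar>phi j - phistar n j\<bar> < e) \<and> \<bar>fst y\<bar> < e \<and> \<bar>snd y\<bar> < e"
    then have hphi: "\<forall>j\<in>{2..n}. \<bar>phi j - phistar n j\<bar> < e" and hy: "\<bar>fst y\<bar> < e" "\<bar>snd y\<bar> < e"
      by auto
    have angb: "\<bar>ang n phi j - phistar n j\<bar> < e" if j: "1 \<le> j" "j \<le> Suc n" for j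
    proof -
      consider "j = 1" | "j = Suc n" | "2 \<le> j \<and> j \<le> n" using j by linarith
      then show ?thesis
      proof cases
        case 1 then show ?thesis using epos by (simp add: ang_def phistar_def)
      next
        case 2 then show ?thesis using epos npos by (simp add: ang_def phistar_def)
      next
        case 3 then show ?thesis using hphi by (simp add: ang_def)
      qed
    qed
    have phd: "phistar n b - phistar n a = (real b - real a) * w" for a b
      unfolding phistar_def w_def using npos by (simp add: field_simps)
    have ssb: "\<forall>j\<in>{1..n}. s0 \<le> ss n phi j"
    proof
      fix j assume j: "j \<in> {1..n}"
      have a1: "\<bar>ang n phi (Suc j) - phistar n (Suc j)\<bar> < e" using angb[of "Suc j"] j by simp
      have a2: "\<bar>ang n phi j - phistar n j\<bar> < e" using angb[of j] j by simp
      have d: "phistar n (Suc j) - phistar n j = w" using phd[of "Suc j" j] by simp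
      define dd where "dd = (ang n phi (Suc j) - ang n phi j) / 2"
      have "w / 4 \<le> dd" "dd \<le> pi / 2" unfolding dd_def using a1 a2 d ew w3 by (auto simp: abs_less_iff)
      then have "sin (w / 4) \<le> sin dd" using wpos by (intro sin_monotone_2pi_le) auto
      then show "s0 \<le> ss n phi j" unfolding s0_def ss_def dd_def .
    qed
    have bb: "\<forall>k\<in>{2..n}. \<bar>aa c k * (fst y * cos (phi k) + snd y * sin (phi k))\<bar> \<le> 4 * e"
    proof
      fix k assume k: "k \<in> {2..n}"
      have "k - 1 \<in> {1..n}" "k \<in> {1..n}" using k by auto
      then have "c (k - 1) = 1 \<or> c (k - 1) = -1" "c k = 1 \<or> c k = -1" using assms(2) by blast+
      then have ab: "\<bar>aa c k\<bar> \<le> 2" unfolding aa_def by auto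
      have "\<bar>fst y * cos (phi k)\<bar> \<le> \<bar>fst y\<bar>" by (simp add: abs_mult mult_left_le)
      moreover have "\<bar>snd y * sin (phi k)\<bar> \<le> \<bar>snd y\<bar>" by (simp add: abs_mult mult_left_le)
      ultimately have "\<bar>fst y * cos (phi k) + snd y * sin (phi k)\<bar> \<le> 2 * e" using hy by linarith
      then have "\<bar>aa c k\<bar> * \<bar>fst y * cos (phi k) + snd y * sin (phi k)\<bar> \<le> 2 * (2 * e)"
        using ab by (intro mult_mono) auto
      then show "\<bar>aa c k * (fst y * cos (phi k) + snd y * sin (phi k))\<bar> \<le> 4 * e" by (simp add: abs_mult)
    qed
    have bB: "4 * e * real n ^ 2 * 4 \<le> s0" using es by (simp add: algebra_simps)
    have sq: "0 < sin (phi q - phi p)"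
    proof -
      have a1: "\<bar>phi q - phistar n q\<bar> < e" "\<bar>phi p - phistar n p\<bar> < e" using hphi pq by auto
      have d: "phistar n q - phistar n p = (real q - real p) * w" using phd .
      have r1: "1 \<le> real q - real p" "real q - real p \<le> real n - 2" using pq by auto
      have f1: "w \<le> (real q - real p) * w" using r1 wpos by simp
      have f2: "(real q - real p) * w \<le> (real n - 2) * w" using r1 wpos by (intro mult_right_mono) auto
      have f3: "(real n - 2) * w = pi - 2 * w" using nw by (simp add: algebra_simps)
      have a3: "phi q - phistar n q < e" "phistar n q - phi q < e" "phi p - phistar n p < e" "phistar n p - phi p < e"
        using a1 by (auto simp: abs_less_iff)
      have "0 < phi q - phi p" using f1 d a3 ew wpos by linarith
      moreover have "phi q - phi p < pi" using f2 f3 d a3 ew wpos by linarith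
      ultimately show ?thesis by (rule sin_gt_zero)
    qed
    show "invertible_mat (KKT n c phi y)"
    proof (rule inv_of_ker)
      show "KKT n c phi y \<in> carrier_mat (n + 1) (n + 1)" by (simp add: KKT_def)
      show "\<forall>v\<in>carrier_vec (n + 1). KKT n c phi y *\<^sub>v v = 0\<^sub>v (n + 1) \<longrightarrow> v = 0\<^sub>v (n + 1)"
        using ker[OF n3 pq(1,2,3) apq sq s0pos ssb bb bB] by blast
    qed
  qed
qed

end
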